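(* Consider the two-source game ($m=2$) with $n_1\ge n_2\ge 0$ and $q\in[0,1)$. Let $\mathbf p$ be an arbitrary pure strategy profile and let $u_1,u_2$ be the numbers of users of $N_1$ and $N_2$, respectively, that choose DP under $\mathbf p$. Define $$t_1(x)=\frac{q\mu/\phi+x(1+\bar q^2)+(n_1+1)\bar q-n_2\bar q^2}{2\bar q},\qquad t_2(x)=\frac{q\mu/\phi+x(1+\bar q^2)+(n_2+1)\bar q-n_1\bar q^2}{2\bar q}.$$ Then: [1] if (a) $u_1=n_1$ and $u_2<n_2$, or (b) $u_1=0$ and $u_2>0$, then $\mathbf p$ is not a Nash equilibrium; [2] if $u_1\in[0,n_1)$ and $u_2\in[0,n_2)$, then $\mathbf p$ is a Nash equilibrium if and only if $u_1\ge t_1(u_2)-1$ and $u_2\ge t_2(u_1)-1$; [3] if $u_1\in(0,n_1)$ and $u_2=n_2$, then $\mathbf p$ is a Nash equilibrium if and only if $u_1\in[t_1(u_2)-1,\,t_1(u_2)]$; [4] if $u_1=n_1$ and $u_2=n_2$, then $\mathbf p$ is a Nash equilibrium if and only if $n_1\bar q\le q\mu/\phi+n_2+\bar q$.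
   Context: Two-source network: sources $s_1,s_2$ and destination $d$; source $s_i$ has a set $N_i$ of $n_i$ users. Each user generates an independent Poisson flow of packets of rate $\phi>0$; each direct link $(s_i,d)$ has service rate $\mu>0$; the sidelink between $s_1$ and $s_2$ loses packets independently with probability $q$, and $\bar q=1-q$. Only pure strategies are considered: a user of $N_1$ chooses DP $(s_1,d)$ or IP $(s_1,s_2,d)$; a user of $N_2$ chooses DP $(s_2,d)$ or IP $(s_2,s_1,d)$. With $u_i$ users of $N_i$ on DP, the traffic rates are $T_1=u_1\phi+(n_2-u_2)\bar q\phi$ and $T_2=u_2\phi+(n_1-u_1)\bar q\phi$. The loss rate of a user of $N_i$ is $\phi\frac{T_i}{T_i+\mu}$ on DP and $\phi\left(q+\bar q\frac{T_j}{T_j+\mu}\right)$ on IP to $s_j$, $j\ne i$ (traffic rates include the user's own traffic). A Nash equilibrium is a pure profile in which no user can strictly decrease its loss rate by unilaterally switching its route. *)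

theory Defs
  imports Complex_Main
begin

text \<open>Users of N_i are indexed by {0..<n_i}; a pure strategy of a
user is a bool: True = direct path (DP), False = indirect path (IP) via the other source.
A pure profile is a pair of functions (s1, s2); only their values on {0..<n_i} matter.\<close>

definition qbar :: "real \<Rightarrow> real" where
  "qbar q = 1 - q"

definition dp_count :: "(nat \<Rightarrow> bool) \<Rightarrow> nat \<Rightarrow> nat" where
  "dp_count s n = card {k. k < n \<and> s k}"

definition traffic :: "real \<Rightarrow> real \<Rightarrow> nat \<Rightarrow> nat \<Rightarrow> (nat \<Rightarrow> bool) \<Rightarrow> (nat \<Rightarrow> bool) \<Rightarrow> real" where
  "traffic phi q ni nj si sj =
     real (dp_count si ni) * phi + real (nj - dp_count sj nj) * qbar q * phi"

definition loss :: "real \<Rightarrow> real \<Rightarrow> real \<Rightarrow> nat \<Rightarrow> nat \<Rightarrow> (nat \<Rightarrow> bool) \<Rightarrow> (nat \<Rightarrow> bool) \<Rightarrow> nat \<Rightarrow> real" where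
  "loss phi mu q ni nj si sj k =
     (if si k then phi * (traffic phi q ni nj si sj / (traffic phi q ni nj si sj + mu))
      else phi * (q + qbar q * (traffic phi q nj ni sj si / (traffic phi q nj ni sj si + mu))))"

definition is_NE :: "real \<Rightarrow> real \<Rightarrow> real \<Rightarrow> nat \<Rightarrow> nat \<Rightarrow> (nat \<Rightarrow> bool) \<Rightarrow> (nat \<Rightarrow> bool) \<Rightarrow> bool" where
  "is_NE phi mu q n1 n2 s1 s2 \<longleftrightarrow>
     (\<forall>k<n1. \<forall>b. \<not> loss phi mu q n1 n2 (s1(k := b)) s2 k < loss phi mu q n1 n2 s1 s2 k) \<and>
     (\<forall>k<n2. \<forall>b. \<not> loss phi mu q n2 n1 (s2(k := b)) s1 k < loss phi mu q n2 n1 s2 s1 k)"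

definition t1 :: "real \<Rightarrow> real \<Rightarrow> real \<Rightarrow> nat \<Rightarrow> nat \<Rightarrow> real \<Rightarrow> real" where
  "t1 phi mu q n1 n2 x =
     (q * mu / phi + x * (1 + (qbar q)^2) + (real n1 + 1) * qbar q - real n2 * (qbar q)^2) / (2 * qbar q)"

definition t2 :: "real \<Rightarrow> real \<Rightarrow> real \<Rightarrow> nat \<Rightarrow> nat \<Rightarrow> real \<Rightarrow> real" where
  "t2 phi mu q n1 n2 x =
     (q * mu / phi + x * (1 + (qbar q)^2) + (real n2 + 1) * qbar q - real n1 * (qbar q)^2) / (2 * qbar q)"

end

theory Submission imports Defs begin

lemma dp_le: "dp_count s n \<le> n"
proof -
  have "{k. k < n \<and> s k} \<subseteq> {..<n}" by auto
  then show ?thesis unfolding dp_count_def by (metis card_lessThan card_mono finite_lessThan)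
qed

lemma dp_upd_True: assumes "k < n" "\<not> s k"
  shows "dp_count (s(k := True)) n = dp_count s n + 1"
proof -
  have "{j. j < n \<and> (s(k := True)) j} = insert k {j. j < n \<and> s j}" using assms by auto
  then show ?thesis unfolding dp_count_def using assms by simp
qed

lemma dp_upd_False: assumes "k < n" "s k"
  shows "dp_count (s(k := False)) n = dp_count s n - 1"
proof -
  have "{j. j < n \<and> (s(k := False)) j} = {j. j < n \<and> s j} - {k}" using assms by auto
  then show ?thesis unfolding dp_count_def using assms by simp
qed

lemma dp_pos: "0 < dp_count s n \<longleftrightarrow> (\<exists>k<n. s k)"
  unfolding dp_count_def by (auto simp: card_gt_0_iff)

lemma dp_lt: "dp_count s n < n \<longleftrightarrow> (\<exists>k<n. \<not> s k)"
proof
  assume H: "dp_count s n < n"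
  show "\<exists>k<n. \<not> s k"
  proof (rule ccontr)
    assume "\<not> (\<exists>k<n. \<not> s k)"
    then have "{k. k < n \<and> s k} = {..<n}" by blast
    then have "dp_count s n = n" unfolding dp_count_def by simp
    then show False using H by simp
  qed
next
  assume "\<exists>k<n. \<not> s k"
  then obtain k where k: "k < n" "\<not> s k" by blast
  have "{j. j < n \<and> s j} \<subseteq> {..<n} - {k}" using k by blast
  then have "dp_count s n \<le> card ({..<n} - {k})" unfolding dp_count_def
    by (intro card_mono) simp_all
  also have "card ({..<n} - {k}) = n - 1" using k by simp
  finally show "dp_count s n < n" using k by linarith
qed

lemma key:
  fixes phi mu q A B :: real
  assumes "phi > 0" "mu > 0" "q < 1" "A \<ge> 0" "B \<ge> 0"
  shows "(phi * (q + (1-q) * (B / (B + mu))) < phi * (A / (A + mu))) \<longleftrightarrow> B + q * mu < (1-q) * A"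
proof -
  have "q + (1-q) * (B / (B + mu)) = 1 - (1-q) * mu / (B + mu)" using assms by (simp add: field_simps)
  moreover have "A / (A + mu) = 1 - mu / (A + mu)" using assms by (simp add: field_simps)
  ultimately have "(phi * (q + (1-q) * (B / (B + mu))) < phi * (A / (A + mu))) \<longleftrightarrow>
     mu / (A + mu) < (1-q) * mu / (B + mu)" using assms by simp
  also have "\<dots> \<longleftrightarrow> mu * (B + mu) < (1-q) * mu * (A + mu)" using assms by (simp add: field_simps)
  also have "\<dots> \<longleftrightarrow> mu * (B + q * mu) < mu * ((1-q) * A)" by (simp add: algebra_simps)
  also have "\<dots> \<longleftrightarrow> B + q * mu < (1-q) * A" using assms by simp
  finally show ?thesis .
qed

lemma key2:
  fixes phi mu q A B :: real
  assumes "phi > 0" "mu > 0" "q < 1" "A \<ge> 0" "B \<ge> 0"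
  shows "(phi * (A / (A + mu)) < phi * (q + (1-q) * (B / (B + mu)))) \<longleftrightarrow> (1-q) * A < B + q * mu"
proof -
  have "q + (1-q) * (B / (B + mu)) = 1 - (1-q) * mu / (B + mu)" using assms by (simp add: field_simps)
  moreover have "A / (A + mu) = 1 - mu / (A + mu)" using assms by (simp add: field_simps)
  ultimately have "(phi * (A / (A + mu)) < phi * (q + (1-q) * (B / (B + mu)))) \<longleftrightarrow>
     (1-q) * mu / (B + mu) < mu / (A + mu)" using assms by simp
  also have "\<dots> \<longleftrightarrow> (1-q) * mu * (A + mu) < mu * (B + mu)" using assms by (simp add: field_simps)
  also have "\<dots> \<longleftrightarrow> mu * ((1-q) * A) < mu * (B + q * mu)" by (simp add: algebra_simps)
  also have "\<dots> \<longleftrightarrow> (1-q) * A < B + q * mu" using assms by simp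
  finally show ?thesis .
qed

lemma scale_le: fixes phi a b c :: real assumes "phi > 0"
  shows "(a * phi \<le> b * phi + c) \<longleftrightarrow> (a \<le> b + c / phi)"
proof -
  have "(b + c/phi) * phi = b * phi + c" using assms by (simp add: field_simps)
  then have "(a * phi \<le> b * phi + c) \<longleftrightarrow> (a * phi \<le> (b + c/phi) * phi)" by simp
  also have "\<dots> \<longleftrightarrow> a \<le> b + c/phi" using assms by simp
  finally show ?thesis .
qed

lemma user_ok:
  fixes si sj :: "nat \<Rightarrow> bool" and ni nj k :: nat and phi mu q :: real
  assumes k: "k < ni" and p: "phi > 0" "mu > 0" "0 \<le> q" "q < 1"
  defines "ui \<equiv> dp_count si ni" and "uj \<equiv> dp_count sj nj"
  shows "(\<forall>b. \<not> loss phi mu q ni nj (si(k:=b)) sj k < loss phi mu q ni nj si sj k) \<longleftrightarrow>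
   (if si k then (1-q)*(real ui + (real nj - real uj)*(1-q)) \<le> real uj + (real ni - real ui + 1)*(1-q) + q*(mu/phi)
    else real uj + (real ni - real ui)*(1-q) + q*(mu/phi) \<le> (1-q)*(real ui + 1 + (real nj - real uj)*(1-q)))"
proof -
  have uin: "ui \<le> ni" and ujn: "uj \<le> nj" unfolding ui_def uj_def by (rule dp_le)+
  have Q: "qbar q = 1 - q" by (simp add: qbar_def)
  show ?thesis
  proof (cases "si k")
    case True
    have all: "(\<forall>b. \<not> loss phi mu q ni nj (si(k:=b)) sj k < loss phi mu q ni nj si sj k) \<longleftrightarrow>
       \<not> loss phi mu q ni nj (si(k:=False)) sj k < loss phi mu q ni nj si sj k"
    proof (intro iffI allI)
      fix b assume H: "\<not> loss phi mu q ni nj (si(k:=False)) sj k < loss phi mu q ni nj si sj k"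
      show "\<not> loss phi mu q ni nj (si(k:=b)) sj k < loss phi mu q ni nj si sj k"
      proof (cases "b = si k")
        case True
        then have "si(k:=b) = si" by auto
        then show ?thesis by simp
      next
        case False
        then have "b = False" using \<open>si k\<close> by auto
        then show ?thesis using H by simp
      qed
    qed blast
    have "0 < ui" unfolding ui_def dp_pos using k True by blast
    then have pos: "ui \<ge> 1" by simp
    have cnt: "dp_count (si(k:=False)) ni = ui - 1" using dp_upd_False[of k ni si, OF k True] ui_def by simp
    define A where "A = (real ui + (real nj - real uj)*(1-q)) * phi"
    define B where "B = (real uj + (real ni - real ui + 1)*(1-q)) * phi"
    have TA: "traffic phi q ni nj si sj = A" unfolding A_def traffic_def ui_def[symmetric] uj_def[symmetric] Q
      using ujn by (simp add: of_nat_diff algebra_simps)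
    have TB: "traffic phi q nj ni sj (si(k:=False)) = B" unfolding B_def traffic_def cnt uj_def[symmetric] Q
      using uin pos by (simp add: of_nat_diff algebra_simps)
    have A0: "A \<ge> 0" unfolding A_def using p ujn by (intro mult_nonneg_nonneg add_nonneg_nonneg) auto
    have B0: "B \<ge> 0" unfolding B_def using p uin by (intro mult_nonneg_nonneg add_nonneg_nonneg) auto
    have "loss phi mu q ni nj (si(k:=False)) sj k = phi * (q + (1-q) * (B / (B + mu)))"
      unfolding loss_def using TB Q by simp
    moreover have "loss phi mu q ni nj si sj k = phi * (A / (A + mu))"
      unfolding loss_def using TA True by simp
    ultimately have "(\<forall>b. \<not> loss phi mu q ni nj (si(k:=b)) sj k < loss phi mu q ni nj si sj k) \<longleftrightarrow>
       (1-q) * A \<le> B + q * mu" 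
    proof -
      assume e1: "loss phi mu q ni nj (si(k:=False)) sj k = phi * (q + (1-q) * (B / (B + mu)))"
        and e2: "loss phi mu q ni nj si sj k = phi * (A / (A + mu))"
      have "(\<forall>b. \<not> loss phi mu q ni nj (si(k:=b)) sj k < loss phi mu q ni nj si sj k) \<longleftrightarrow>
         \<not> (phi * (q + (1-q) * (B / (B + mu))) < phi * (A / (A + mu)))" using all e1 e2 by (simp only:)
      also have "\<dots> \<longleftrightarrow> \<not> (B + q * mu < (1-q) * A)" using key[OF p(1,2) p(4) A0 B0] by (simp only:)
      also have "\<dots> \<longleftrightarrow> (1-q) * A \<le> B + q * mu" by (rule not_less)
      finally show ?thesis .
    qed
    also have "\<dots> \<longleftrightarrow> (1-q)*(real ui + (real nj - real uj)*(1-q)) \<le> real uj + (real ni - real ui + 1)*(1-q) + q*mu/phi"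
      unfolding A_def B_def using scale_le[OF p(1)] by (metis mult.assoc)
    finally show ?thesis using True by simp
  next
    case False
    have all: "(\<forall>b. \<not> loss phi mu q ni nj (si(k:=b)) sj k < loss phi mu q ni nj si sj k) \<longleftrightarrow>
       \<not> loss phi mu q ni nj (si(k:=True)) sj k < loss phi mu q ni nj si sj k"
    proof (intro iffI allI)
      fix b assume H: "\<not> loss phi mu q ni nj (si(k:=True)) sj k < loss phi mu q ni nj si sj k"
      show "\<not> loss phi mu q ni nj (si(k:=b)) sj k < loss phi mu q ni nj si sj k"
      proof (cases "b = si k")
        case True
        then have "si(k:=b) = si" by auto
        then show ?thesis by simp
      next
        case False
        then have "b = True" using \<open>\<not> si k\<close> by auto
        then show ?thesis using H by simp
      qed
    qed blast
    have cnt: "dp_count (si(k:=True)) ni = ui + 1" using dp_upd_True[of k ni si, OF k False] ui_def by simp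
    define A where "A = (real ui + 1 + (real nj - real uj)*(1-q)) * phi"
    define B where "B = (real uj + (real ni - real ui)*(1-q)) * phi"
    have TA: "traffic phi q ni nj (si(k:=True)) sj = A" unfolding A_def traffic_def cnt uj_def[symmetric] Q
      using ujn by (simp add: of_nat_diff algebra_simps)
    have TB: "traffic phi q nj ni sj si = B" unfolding B_def traffic_def ui_def[symmetric] uj_def[symmetric] Q
      using uin by (simp add: of_nat_diff algebra_simps)
    have A0: "A \<ge> 0" unfolding A_def using p ujn by (intro mult_nonneg_nonneg add_nonneg_nonneg) auto
    have B0: "B \<ge> 0" unfolding B_def using p uin by (intro mult_nonneg_nonneg add_nonneg_nonneg) auto
    have "loss phi mu q ni nj si sj k = phi * (q + (1-q) * (B / (B + mu)))"
      unfolding loss_def using TB Q False by simp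
    moreover have "loss phi mu q ni nj (si(k:=True)) sj k = phi * (A / (A + mu))"
      unfolding loss_def using TA by simp
    ultimately have "(\<forall>b. \<not> loss phi mu q ni nj (si(k:=b)) sj k < loss phi mu q ni nj si sj k) \<longleftrightarrow>
       B + q * mu \<le> (1-q) * A" 
    proof -
      assume e1: "loss phi mu q ni nj si sj k = phi * (q + (1-q) * (B / (B + mu)))"
        and e2: "loss phi mu q ni nj (si(k:=True)) sj k = phi * (A / (A + mu))"
      have "(\<forall>b. \<not> loss phi mu q ni nj (si(k:=b)) sj k < loss phi mu q ni nj si sj k) \<longleftrightarrow>
         \<not> (phi * (A / (A + mu)) < phi * (q + (1-q) * (B / (B + mu))))" using all e1 e2 by (simp only:)
      also have "\<dots> \<longleftrightarrow> \<not> ((1-q) * A < B + q * mu)" using key2[OF p(1,2) p(4) A0 B0] by (simp only:)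
      also have "\<dots> \<longleftrightarrow> B + q * mu \<le> (1-q) * A" by (rule not_less)
      finally show ?thesis .
    qed
    also have "\<dots> \<longleftrightarrow> real uj + (real ni - real ui)*(1-q) + q*mu/phi \<le> (1-q)*(real ui + 1 + (real nj - real uj)*(1-q))"
    proof -
      have "B + q * mu \<le> (1-q) * A \<longleftrightarrow> (real uj + (real ni - real ui)*(1-q)) * phi + q*mu \<le> ((1-q)*(real ui + 1 + (real nj - real uj)*(1-q))) * phi"
        unfolding A_def B_def by (simp add: algebra_simps)
      also have "\<dots> \<longleftrightarrow> (real uj + (real ni - real ui)*(1-q) + q*mu/phi) * phi \<le> ((1-q)*(real ui + 1 + (real nj - real uj)*(1-q))) * phi"
      proof -
        have "(real uj + (real ni - real ui)*(1-q) + q*mu/phi) * phi = (real uj + (real ni - real ui)*(1-q)) * phi + q*mu"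
          using p by (simp add: distrib_right)
        then show ?thesis by simp
      qed
      also have "\<dots> \<longleftrightarrow> real uj + (real ni - real ui)*(1-q) + q*mu/phi \<le> (1-q)*(real ui + 1 + (real nj - real uj)*(1-q))"
        using p by (simp only: mult_le_cancel_right_pos)
      finally show ?thesis .
    qed
    finally show ?thesis using False by simp
  qed
qed

lemma NE_char:
  fixes phi mu q :: real and n1 n2 :: nat and s1 s2 :: "nat \<Rightarrow> bool"
  assumes p: "phi > 0" "mu > 0" "0 \<le> q" "q < 1"
  defines "x1 \<equiv> real (dp_count s1 n1)" and "x2 \<equiv> real (dp_count s2 n2)" and "a \<equiv> mu / phi"
  shows "is_NE phi mu q n1 n2 s1 s2 \<longleftrightarrow>
    (0 < dp_count s1 n1 \<longrightarrow> (1-q)*(x1 + (real n2 - x2)*(1-q)) \<le> x2 + (real n1 - x1 + 1)*(1-q) + q*a) \<and>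
    (dp_count s1 n1 < n1 \<longrightarrow> x2 + (real n1 - x1)*(1-q) + q*a \<le> (1-q)*(x1 + 1 + (real n2 - x2)*(1-q))) \<and>
    (0 < dp_count s2 n2 \<longrightarrow> (1-q)*(x2 + (real n1 - x1)*(1-q)) \<le> x1 + (real n2 - x2 + 1)*(1-q) + q*a) \<and>
    (dp_count s2 n2 < n2 \<longrightarrow> x1 + (real n2 - x2)*(1-q) + q*a \<le> (1-q)*(x2 + 1 + (real n1 - x1)*(1-q)))"
proof -
  have A: "(\<forall>k<n1. \<forall>b. \<not> loss phi mu q n1 n2 (s1(k := b)) s2 k < loss phi mu q n1 n2 s1 s2 k) \<longleftrightarrow>
    (\<forall>k<n1. if s1 k then (1-q)*(x1 + (real n2 - x2)*(1-q)) \<le> x2 + (real n1 - x1 + 1)*(1-q) + q*a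
       else x2 + (real n1 - x1)*(1-q) + q*a \<le> (1-q)*(x1 + 1 + (real n2 - x2)*(1-q)))"
    unfolding x1_def x2_def a_def using user_ok[OF _ p] by simp
  have B: "(\<forall>k<n2. \<forall>b. \<not> loss phi mu q n2 n1 (s2(k := b)) s1 k < loss phi mu q n2 n1 s2 s1 k) \<longleftrightarrow>
    (\<forall>k<n2. if s2 k then (1-q)*(x2 + (real n1 - x1)*(1-q)) \<le> x1 + (real n2 - x2 + 1)*(1-q) + q*a
       else x1 + (real n2 - x2)*(1-q) + q*a \<le> (1-q)*(x2 + 1 + (real n1 - x1)*(1-q)))"
    unfolding x1_def x2_def a_def using user_ok[OF _ p] by simp
  show ?thesis unfolding is_NE_def A B dp_pos dp_lt by auto
qed

theorem theorem4:
  fixes phi mu q :: real and n1 n2 :: nat and s1 s2 :: "nat \<Rightarrow> bool"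
  assumes "phi > 0" and "mu > 0" and "0 \<le> q" and "q < 1" and "n2 \<le> n1"
  defines "u1 \<equiv> dp_count s1 n1" and "u2 \<equiv> dp_count s2 n2"
  shows
    "(((u1 = n1 \<and> u2 < n2) \<or> (u1 = 0 \<and> u2 > 0)) \<longrightarrow> \<not> is_NE phi mu q n1 n2 s1 s2)
   \<and> ((u1 < n1 \<and> u2 < n2) \<longrightarrow>
        (is_NE phi mu q n1 n2 s1 s2 \<longleftrightarrow>
           real u1 \<ge> t1 phi mu q n1 n2 (real u2) - 1 \<and> real u2 \<ge> t2 phi mu q n1 n2 (real u1) - 1))
   \<and> ((0 < u1 \<and> u1 < n1 \<and> u2 = n2) \<longrightarrow>
        (is_NE phi mu q n1 n2 s1 s2 \<longleftrightarrow>
           t1 phi mu q n1 n2 (real u2) - 1 \<le> real u1 \<and> real u1 \<le> t1 phi mu q n1 n2 (real u2)))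
   \<and> ((u1 = n1 \<and> u2 = n2) \<longrightarrow>
        (is_NE phi mu q n1 n2 s1 s2 \<longleftrightarrow>
           real n1 * qbar q \<le> q * mu / phi + real n2 + qbar q))"
proof -
  note p = assms(1-4)
  define x1 where "x1 = real u1"
  define x2 where "x2 = real u2"
  define m1 where "m1 = real n1"
  define m2 where "m2 = real n2"
  define a where "a = mu / phi"
  define Q where "Q = 1 - q"
  have a0: "a > 0" unfolding a_def using p by simp
  have Q0: "Q > 0" "Q \<le> 1" unfolding Q_def using p by auto
  have qQ: "q = 1 - Q" unfolding Q_def by simp
  have qa0: "q * a \<ge> 0" using p a0 by simp
  have u1n: "u1 \<le> n1" and u2n: "u2 \<le> n2" unfolding u1_def u2_def by (rule dp_le)+
  have x10: "0 \<le> x1" "x1 \<le> m1" unfolding x1_def m1_def using u1n by auto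
  have x20: "0 \<le> x2" "x2 \<le> m2" unfolding x2_def m2_def using u2n by auto
  have m21: "m2 \<le> m1" unfolding m1_def m2_def using assms(5) by simp
  define SD1 where "SD1 = x2 + (m1 - x1 + 1)*Q + q*a - Q*(x1 + (m2 - x2)*Q)"
  define SI1 where "SI1 = Q*(x1 + 1 + (m2 - x2)*Q) - (x2 + (m1 - x1)*Q + q*a)"
  define SD2 where "SD2 = x1 + (m2 - x2 + 1)*Q + q*a - Q*(x2 + (m1 - x1)*Q)"
  define SI2 where "SI2 = Q*(x2 + 1 + (m1 - x1)*Q) - (x1 + (m2 - x2)*Q + q*a)"
  have NE: "is_NE phi mu q n1 n2 s1 s2 \<longleftrightarrow>
     (0 < u1 \<longrightarrow> 0 \<le> SD1) \<and> (u1 < n1 \<longrightarrow> 0 \<le> SI1) \<and> (0 < u2 \<longrightarrow> 0 \<le> SD2) \<and> (u2 < n2 \<longrightarrow> 0 \<le> SI2)"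
    unfolding NE_char[OF p] SD1_def SI1_def SD2_def SI2_def
    by (simp only: x1_def x2_def m1_def m2_def a_def Q_def u1_def u2_def diff_ge_0_iff_ge)
  have t1e: "t1 phi mu q n1 n2 y = (q*a + y*(1+Q^2) + (m1+1)*Q - m2*Q^2) / (2*Q)" for y
    unfolding t1_def a_def Q_def m1_def m2_def qbar_def by simp
  have t2e: "t2 phi mu q n1 n2 y = (q*a + y*(1+Q^2) + (m2+1)*Q - m1*Q^2) / (2*Q)" for y
    unfolding t2_def a_def Q_def m1_def m2_def qbar_def by simp
  have T1: "t1 phi mu q n1 n2 x2 - 1 \<le> x1 \<longleftrightarrow> 0 \<le> SI1"
  proof -
    have "t1 phi mu q n1 n2 x2 - 1 \<le> x1 \<longleftrightarrow> q*a + x2*(1+Q^2) + (m1+1)*Q - m2*Q^2 \<le> (x1 + 1) * (2*Q)"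
      unfolding t1e using Q0 by (simp add: divide_le_eq algebra_simps)
    also have "\<dots> \<longleftrightarrow> 0 \<le> SI1" unfolding SI1_def by (simp add: algebra_simps power2_eq_square)
    finally show ?thesis .
  qed
  have T1': "x1 \<le> t1 phi mu q n1 n2 x2 \<longleftrightarrow> 0 \<le> SD1"
  proof -
    have "x1 \<le> t1 phi mu q n1 n2 x2 \<longleftrightarrow> x1 * (2*Q) \<le> q*a + x2*(1+Q^2) + (m1+1)*Q - m2*Q^2"
      unfolding t1e using Q0 by (simp add: le_divide_eq algebra_simps)
    also have "\<dots> \<longleftrightarrow> 0 \<le> SD1" unfolding SD1_def by (simp add: algebra_simps power2_eq_square)
    finally show ?thesis .
  qed
  have T2: "t2 phi mu q n1 n2 x1 - 1 \<le> x2 \<longleftrightarrow> 0 \<le> SI2"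
  proof -
    have "t2 phi mu q n1 n2 x1 - 1 \<le> x2 \<longleftrightarrow> q*a + x1*(1+Q^2) + (m2+1)*Q - m1*Q^2 \<le> (x2 + 1) * (2*Q)"
      unfolding t2e using Q0 by (simp add: divide_le_eq algebra_simps)
    also have "\<dots> \<longleftrightarrow> 0 \<le> SI2" unfolding SI2_def by (simp add: algebra_simps power2_eq_square)
    finally show ?thesis .
  qed
  have C1: "(1+Q^2)*SD1 = 2*Q*SI2 + (x2*(1-Q^2)^2 + m1*Q*(1-Q^2) + Q*(1-Q)^2 + m2*Q^2*(1-Q^2) + q*a*(1+Q)^2)"
    unfolding SD1_def SI2_def qQ by algebra
  have C2: "(1+Q^2)*SD2 = 2*Q*SI1 + (x1*(1-Q^2)^2 + m2*Q*(1-Q^2) + Q*(1-Q)^2 + m1*Q^2*(1-Q^2) + q*a*(1+Q)^2)"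
    unfolding SD2_def SI1_def qQ by algebra
  have Q2: "0 \<le> 1 - Q^2" using Q0 by (simp add: power_le_one)
  have R1: "0 \<le> x2*(1-Q^2)^2 + m1*Q*(1-Q^2) + Q*(1-Q)^2 + m2*Q^2*(1-Q^2) + q*a*(1+Q)^2"
    using Q0 Q2 x10 x20 qa0 p(3) a0 by (intro add_nonneg_nonneg mult_nonneg_nonneg) auto
  have R2: "0 \<le> x1*(1-Q^2)^2 + m2*Q*(1-Q^2) + Q*(1-Q)^2 + m1*Q^2*(1-Q^2) + q*a*(1+Q)^2"
    using Q0 Q2 x10 x20 qa0 p(3) a0 by (intro add_nonneg_nonneg mult_nonneg_nonneg) auto
  have IMP1: "0 \<le> SD1" if "0 \<le> SI2"
  proof -
    have "0 \<le> (1+Q^2)*SD1" unfolding C1 using that R1 Q0 by simp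
    moreover have "0 < 1 + Q^2" by (simp add: add_pos_nonneg)
    ultimately show ?thesis by (simp add: zero_le_mult_iff)
  qed
  have IMP2: "0 \<le> SD2" if "0 \<le> SI1"
  proof -
    have "0 \<le> (1+Q^2)*SD2" unfolding C2 using that R2 Q0 by simp
    moreover have "0 < 1 + Q^2" by (simp add: add_pos_nonneg)
    ultimately show ?thesis by (simp add: zero_le_mult_iff)
  qed
  have P1a: "\<not> is_NE phi mu q n1 n2 s1 s2" if "u1 = n1" "u2 < n2"
  proof
    assume "is_NE phi mu q n1 n2 s1 s2"
    then have S: "0 \<le> SI2" using NE that by simp
    have "x1 = m1" unfolding x1_def m1_def using that by simp
    then have E: "SI2 = 2*(Q*x2) + Q - m1 - Q*m2 - q*a" unfolding SI2_def by (simp add: algebra_simps power2_eq_square)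
    have "x2 + 1 \<le> m2" unfolding x2_def m2_def using that by simp
    then have "Q*(x2+1) \<le> Q*m2" using Q0 by (simp add: mult_left_mono)
    moreover have "Q*m2 \<le> m2" using Q0 x20 by (simp add: mult_left_le_one_le)
    ultimately show False using S E m21 qa0 Q0 by (simp add: algebra_simps)
  qed
  have P1b: "\<not> is_NE phi mu q n1 n2 s1 s2" if "u1 = 0" "u2 > 0"
  proof
    assume "is_NE phi mu q n1 n2 s1 s2"
    moreover have "u1 < n1" using that u2n assms(5) by simp
    ultimately have S: "0 \<le> SI1" using NE by simp
    have "x1 = 0" unfolding x1_def using that by simp
    then have E: "SI1 = Q + m2*Q^2 - x2*(1+Q^2) - m1*Q - q*a" unfolding SI1_def by (simp add: algebra_simps power2_eq_square)
    have "1 \<le> x2" unfolding x2_def using that by simp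
    then have "1 + Q^2 \<le> x2*(1+Q^2)" by (simp add: add_pos_nonneg)
    moreover have "m2*Q^2 \<le> m1*Q^2" using m21 by (simp add: mult_right_mono)
    moreover have "m1*Q^2 \<le> m1*Q" using Q0 x10 by (simp add: power2_eq_square mult_left_mono mult_left_le_one_le)
    moreover have "Q < 1 + Q^2"
    proof -
      have "0 < Q^2" using Q0 by simp
      then show ?thesis using Q0 by linarith
    qed
    ultimately show False using S E qa0 by linarith
  qed
  show ?thesis
  proof (intro conjI impI)
    assume "(u1 = n1 \<and> u2 < n2) \<or> (u1 = 0 \<and> u2 > 0)"
    then show "\<not> is_NE phi mu q n1 n2 s1 s2" using P1a P1b by blast
  next
    assume H: "u1 < n1 \<and> u2 < n2"
    show "is_NE phi mu q n1 n2 s1 s2 \<longleftrightarrow>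
           real u1 \<ge> t1 phi mu q n1 n2 (real u2) - 1 \<and> real u2 \<ge> t2 phi mu q n1 n2 (real u1) - 1"
      using T1 T2 NE H IMP1 IMP2 unfolding x1_def x2_def by auto
  next
    assume H: "0 < u1 \<and> u1 < n1 \<and> u2 = n2"
    have "x2 = m2" unfolding x2_def m2_def using H by simp
    then have E: "SD2 - SI1 = x1*(1-Q)^2 + m2*(1-Q) + m1*Q*(1-Q) + 2*(q*a)"
      unfolding SD2_def SI1_def by (simp add: algebra_simps power2_eq_square)
    have "0 \<le> x1*(1-Q)^2 + m2*(1-Q) + m1*Q*(1-Q)"
      using Q0 x10 x20 by (intro add_nonneg_nonneg mult_nonneg_nonneg) auto
    then have "0 \<le> SI1 \<Longrightarrow> 0 \<le> SD2" using E qa0 by linarith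
    then show "is_NE phi mu q n1 n2 s1 s2 \<longleftrightarrow>
           t1 phi mu q n1 n2 (real u2) - 1 \<le> real u1 \<and> real u1 \<le> t1 phi mu q n1 n2 (real u2)"
      using T1 T1' NE H unfolding x1_def x2_def by auto
  next
    assume H: "u1 = n1 \<and> u2 = n2"
    have xs: "x1 = m1" "x2 = m2" unfolding x1_def x2_def m1_def m2_def using H by auto
    have E1: "SD1 = m2 + Q - m1*Q + q*a" unfolding SD1_def xs by (simp add: algebra_simps power2_eq_square)
    have E2: "SD2 = m1 + Q - m2*Q + q*a" unfolding SD2_def xs by (simp add: algebra_simps power2_eq_square)
    have "m2*Q \<le> m2" using Q0 x20 by (simp add: mult_left_le_one_le mult.commute)
    then have D2: "0 \<le> SD2" using E2 m21 qa0 Q0 by linarith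
    have goal: "real n1 * qbar q \<le> q * mu / phi + real n2 + qbar q \<longleftrightarrow> 0 \<le> SD1"
      unfolding E1 m1_def m2_def qbar_def Q_def a_def by (simp add: algebra_simps)
    have "n1 = 0 \<Longrightarrow> 0 \<le> SD1" using E1 x20 Q0 qa0 unfolding m1_def by simp
    then show "is_NE phi mu q n1 n2 s1 s2 \<longleftrightarrow> real n1 * qbar q \<le> q * mu / phi + real n2 + qbar q"
      unfolding goal using NE H D2 u2n by auto
  qed
qed

end
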